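(* Consider $\dot x=f(x)+\psi(x)$, where $f,\psi:\mathbb R^n\to\mathbb R^n$ are continuous, $f(0)=0$, and there exists $L>0$ with $\|\psi(x)\|\le L\|x\|$ for all $x\in\mathbb R^n$. Suppose there is a continuously differentiable positive definite function $V:\mathbb R^n\to\mathbb R$ such that along trajectories of the nominal system $\dot x=f(x)$, $$\dot V(x)=\frac{\partial V}{\partial x}(x)f(x)\le-aV(x)^p-bV(x)^q$$ with $a,b>0$, $0<p<1$, $q>1$, and suppose there exist $k_1,k_2>0$ such that $V(x)\ge k_1\|x\|^2$ and $\|\frac{\partial V}{\partial x}(x)\|\le k_2\|x\|$ for all $x\in\mathbb R^n$. Then the origin of $\dot x=f(x)+\psi(x)$ is fixed-time stable.
   Context: The origin of $\dot x=F(x)$ is fixed-time stable if it is Lyapunov stable and there exist a neighborhood $D$ of the origin and a constant $T<\infty$ such that every solution with $x(0)\in D$ satisfies $x(t)=0$ for all $t\ge T$ (the bound $T$ being independent of the initial condition in $D$). *)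

theory Defs
  imports "HOL-Analysis.Analysis"
begin

definition is_solution :: "('a::real_normed_vector \<Rightarrow> 'a) \<Rightarrow> (real \<Rightarrow> 'a) \<Rightarrow> bool" where
  "is_solution F x \<longleftrightarrow>
     (\<forall>t\<ge>0. (x has_vector_derivative F (x t)) (at t within {0..}))"

definition lyapunov_stable :: "('a::real_normed_vector \<Rightarrow> 'a) \<Rightarrow> bool" where
  "lyapunov_stable F \<longleftrightarrow>
     (\<forall>\<epsilon>>0. \<exists>\<delta>>0. \<forall>x. is_solution F x \<and> norm (x 0) < \<delta> \<longrightarrow>
        (\<forall>t\<ge>0. norm (x t) < \<epsilon>))"

definition fixed_time_stable :: "('a::real_normed_vector \<Rightarrow> 'a) \<Rightarrow> bool" where
  "fixed_time_stable F \<longleftrightarrow> lyapunov_stable F \<and>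
     (\<exists>D T. open D \<and> 0 \<in> D \<and>
        (\<forall>x. is_solution F x \<and> x 0 \<in> D \<longrightarrow> (\<forall>t\<ge>T. x t = 0)))"

end

theory Submission
  imports Defs
begin

theorem corollary2:
  fixes f \<psi> :: "'a::euclidean_space \<Rightarrow> 'a"
    and V :: "'a \<Rightarrow> real" and gradV :: "'a \<Rightarrow> 'a"
    and L a b p q k1 k2 :: real
  assumes f_cont: "continuous_on UNIV f"
    and psi_cont: "continuous_on UNIV \<psi>"
    and f0: "f 0 = 0"
    and L_pos: "L > 0"
    and psi_bound: "\<And>x. norm (\<psi> x) \<le> L * norm x"
    and V_deriv: "\<And>x. (V has_derivative (\<lambda>h. gradV x \<bullet> h)) (at x)"
    and gradV_cont: "continuous_on UNIV gradV"
    and V0: "V 0 = 0"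
    and V_pos: "\<And>x. x \<noteq> 0 \<Longrightarrow> V x > 0"
    and a_pos: "a > 0" and b_pos: "b > 0"
    and p_bounds: "0 < p" "p < 1" and q_gt: "q > 1"
    and Vdot: "\<And>x. gradV x \<bullet> f x \<le> - a * V x powr p - b * V x powr q"
    and k1_pos: "k1 > 0" and k2_pos: "k2 > 0"
    and V_lower: "\<And>x. V x \<ge> k1 * (norm x)\<^sup>2"
    and gradV_bound: "\<And>x. norm (gradV x) \<le> k2 * norm x"
  shows "fixed_time_stable (\<lambda>x. f x + \<psi> x)"
proof -
  define F where "F = (\<lambda>x. f x + \<psi> x)"
  define c where "c = k2 * L / k1"
  have c_pos: "c > 0" using k1_pos k2_pos L_pos by (simp add: c_def)
  define r where "r = (a / (2 * c)) powr (1 / (1 - p))"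
  have r_pos: "r > 0" using a_pos c_pos by (simp add: r_def)
  have rp: "r powr (1 - p) = a / (2 * c)"
    using p_bounds a_pos c_pos by (simp add: r_def powr_powr)
  have Vnn: "\<And>y. V y \<ge> 0" by (metis V0 V_pos order_less_imp_le order_refl)
  have Vcont: "continuous_on UNIV V"
    using V_deriv has_derivative_continuous continuous_at_imp_continuous_on by blast
  have pert: "\<And>y. gradV y \<bullet> \<psi> y \<le> c * V y"
  proof -
    fix y
    have "gradV y \<bullet> \<psi> y \<le> norm (gradV y) * norm (\<psi> y)" by (rule norm_cauchy_schwarz)
    also have "\<dots> \<le> (k2 * norm y) * (L * norm y)"
      by (intro mult_mono gradV_bound psi_bound) (use k2_pos in auto)
    also have "\<dots> = (k2 * L / k1) * (k1 * (norm y)\<^sup>2)" using k1_pos by (simp add: power2_eq_square field_simps)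
    also have "\<dots> \<le> c * V y" unfolding c_def
      by (intro mult_left_mono V_lower) (use k1_pos k2_pos L_pos in auto)
    finally show "gradV y \<bullet> \<psi> y \<le> c * V y" .
  qed
  have diss: "\<And>y. V y \<le> r \<Longrightarrow> gradV y \<bullet> F y \<le> - (a/2) * V y powr p"
  proof -
    fix y assume yr: "V y \<le> r"
    have "gradV y \<bullet> F y = gradV y \<bullet> f y + gradV y \<bullet> \<psi> y" by (simp add: F_def inner_add_right)
    also have "\<dots> \<le> - a * V y powr p + c * V y"
      using Vdot[of y] pert[of y] b_pos by (smt (verit) mult_nonneg_nonneg powr_ge_zero)
    also have "c * V y \<le> (a/2) * V y powr p"
    proof (cases "V y = 0")
      case True then show ?thesis by simp
    next
      case False
      then have vp: "V y > 0" using Vnn[of y] by linarith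
      have "V y = V y powr (1 - p) * V y powr p" using vp by (simp add: powr_add[symmetric])
      moreover have "V y powr (1 - p) \<le> r powr (1 - p)"
        using vp yr p_bounds by (intro powr_mono2) auto
      ultimately have "c * V y \<le> c * (r powr (1 - p) * V y powr p)"
        using c_pos vp by (metis mult_left_mono mult_right_mono powr_ge_zero less_imp_le)
      then show ?thesis using rp c_pos by (simp add: field_simps)
    qed
    finally show "gradV y \<bullet> F y \<le> - (a/2) * V y powr p" by simp
  qed
  define k where "k = (1 - p) * (a / 2)"
  have k_pos: "k > 0" using p_bounds a_pos by (simp add: k_def)
  define T where "T = r powr (1 - p) / k"
  have traj: "(\<forall>t\<ge>0. V (x t) \<le> V (x 0)) \<and> (\<forall>t\<ge>T. x t = 0)"
    if sol: "is_solution F x" and x0r: "V (x 0) < r" for x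
  proof -
    define v where "v = (\<lambda>t. V (x t))"
    have xder: "(x has_vector_derivative F (x t)) (at t within {0..})" if "t \<ge> 0" for t
      using sol that unfolding is_solution_def by blast
    have vder: "(v has_real_derivative (gradV (x t) \<bullet> F (x t))) (at t within {0..})"
      if "t \<ge> 0" for t
    proof -
      have d1: "(x has_derivative (\<lambda>h. h *\<^sub>R F (x t))) (at t within {0..})"
        using xder[OF that] by (simp add: has_vector_derivative_def)
      have d2: "(V has_derivative (\<lambda>h. gradV (x t) \<bullet> h)) (at (x t) within x ` {0..})"
        using V_deriv has_derivative_at_withinI by blast
      have "((V \<circ> x) has_derivative ((\<lambda>h. gradV (x t) \<bullet> h) \<circ> (\<lambda>h. h *\<^sub>R F (x t)))) (at t within {0..})"
        by (rule diff_chain_within[OF d1 d2])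
      then show ?thesis unfolding has_field_derivative_def v_def
        by (simp add: o_def mult.commute[of _ "gradV (x t) \<bullet> F (x t)"])
    qed
    have vder_at: "(v has_real_derivative (gradV (x t) \<bullet> F (x t))) (at t)" if "t > 0" for t
    proof -
      have "at t within {0..} = at t" using that by (intro at_within_interior) auto
      then show ?thesis using vder[of t] that by simp
    qed
    have vcont: "continuous_on {0..} v"
      unfolding continuous_on_eq_continuous_within using vder DERIV_continuous by (metis atLeast_iff)
    have vnn: "\<And>t. v t \<ge> 0" using Vnn by (simp add: v_def)
    have inv: "v t \<le> v 0" if "t \<ge> 0" for t
    proof (rule ccontr)
      assume "\<not> v t \<le> v 0"
      then have gt: "v t > v 0" by simp
      define l where "l = (v 0 + min (v t) r) / 2"
      have l1: "v 0 < l" "l < r" "l < v t" using gt x0r by (auto simp: l_def v_def)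
      define A where "A = {s \<in> {0..t}. l \<le> v s}"
      have "A = {0..t} \<inter> v -` {l..}" by (auto simp: A_def)
      moreover have "closed ({0..t} \<inter> v -` {l..})"
        by (intro continuous_closed_preimage continuous_on_subset[OF vcont]) auto
      ultimately have Acl: "closed A" by simp
      have Ane: "A \<noteq> {}" using that l1 by (auto simp: A_def)
      have Abd: "bdd_below A" by (auto simp: A_def bdd_below_def)
      define s1 where "s1 = Inf A"
      have s1A: "s1 \<in> A" unfolding s1_def using closed_contains_Inf[OF Ane Abd Acl] .
      then have s1: "0 \<le> s1" "s1 \<le> t" "l \<le> v s1" by (auto simp: A_def)
      have below: "v s < l" if "0 \<le> s" "s < s1" for s
      proof (rule ccontr)
        assume "\<not> v s < l"
        then have "s \<in> A" using that s1 by (auto simp: A_def)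
        then have "s1 \<le> s" unfolding s1_def using Abd by (rule cInf_lower)
        then show False using that by simp
      qed
      have "v s1 \<le> v 0"
      proof (rule DERIV_nonpos_imp_decreasing_open[OF s1(1)])
        fix y assume y: "0 < y" "y < s1"
        have "v y \<le> r" using below[of y] y l1 by simp
        then have "gradV (x y) \<bullet> F (x y) \<le> - (a/2) * V (x y) powr p"
          by (intro diss) (simp add: v_def)
        also have "\<dots> \<le> 0" using a_pos by simp
        finally show "\<exists>d. DERIV v y :> d \<and> d \<le> 0" using vder_at[OF y(1)] by blast
      next
        show "continuous_on {0..s1} v" by (rule continuous_on_subset[OF vcont]) auto
      qed
      then show False using s1 l1 by simp
    qed
    have dneg: "gradV (x y) \<bullet> F (x y) \<le> - (a/2) * v y powr p" if "y \<ge> 0" for y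
      using diss[of "x y"] inv[OF that] x0r by (simp add: v_def)
    have mono: "v t \<le> v s" if "0 \<le> s" "s \<le> t" for s t
    proof (rule DERIV_nonpos_imp_decreasing_open[OF that(2)])
      fix y assume y: "s < y" "y < t"
      have "0 \<le> (a/2) * v y powr p" using a_pos by simp
      then have "gradV (x y) \<bullet> F (x y) \<le> 0"
        using dneg[of y] y that by linarith
      then show "\<exists>d. DERIV v y :> d \<and> d \<le> 0" using vder_at[of y] y that by auto
    next
      show "continuous_on {s..t} v" by (rule continuous_on_subset[OF vcont]) (use that in auto)
    qed
    have fin: "x t = 0" if tT: "t \<ge> T" for t
    proof (rule ccontr)
      assume "x t \<noteq> 0"
      then have vt: "v t > 0" using V_pos by (simp add: v_def)
      have T0: "T > 0" using r_pos k_pos by (simp add: T_def)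
      have t0: "t > 0" using tT T0 by simp
      have vpos: "v s > 0" if "0 \<le> s" "s \<le> t" for s using mono[OF that] vt by simp
      define w where "w = (\<lambda>s. v s powr (1 - p) + k * s)"
      have "w t \<le> w 0"
      proof (rule DERIV_nonpos_imp_decreasing_open[of 0 t])
        show "0 \<le> t" using t0 by simp
      next
        fix y assume y: "0 < y" "y < t"
        have vy: "v y > 0" using vpos[of y] y by simp
        have D: "DERIV w y :> ((1 - p) * v y powr (1 - p - 1) * (gradV (x y) \<bullet> F (x y)) + k * 1)"
          unfolding w_def
        proof (rule DERIV_add)
          show "DERIV (\<lambda>s. v s powr (1 - p)) y :> (1 - p) * v y powr (1 - p - 1) * (gradV (x y) \<bullet> F (x y))"
            using DERIV_fun_powr[OF vder_at[OF y(1)] vy, of "1 - p"] by simp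
          show "DERIV (\<lambda>s. k * s) y :> k * 1" by (intro DERIV_cmult DERIV_ident)
        qed
        have e: "v y powr (1 - p - 1) * v y powr p = 1"
          using vy by (simp add: powr_add[symmetric])
        have "(1 - p) * v y powr (1 - p - 1) * (gradV (x y) \<bullet> F (x y))
              \<le> (1 - p) * v y powr (1 - p - 1) * (- (a/2) * v y powr p)"
          using dneg[of y] y p_bounds by (intro mult_left_mono) auto
        also have "\<dots> = - k" using e by (simp add: k_def algebra_simps) (simp add: field_simps)
        finally show "\<exists>d. DERIV w y :> d \<and> d \<le> 0" using D by (intro exI[of _ "_ + k * 1"]) auto
      next
        show "continuous_on {0..t} w" unfolding w_def
          using continuous_on_subset[OF vcont, of "{0..t}"] vpos
          by (intro continuous_on_add continuous_on_powr continuous_on_mult continuous_on_const continuous_on_id) (auto, metis less_irrefl)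
      qed
      moreover have "v 0 powr (1 - p) < r powr (1 - p)"
        using vpos[of 0] t0 x0r p_bounds by (intro powr_less_mono2) (auto simp: v_def)
      moreover have "k * T = r powr (1 - p)" using k_pos by (simp add: T_def)
      moreover have "k * T \<le> k * t" using k_pos tT by simp
      moreover have "v t powr (1 - p) > 0" using vt by simp
      ultimately show False by (simp add: w_def)
    qed
    show ?thesis using inv fin by (simp add: v_def)
  qed
  have Vat: "\<And>y. continuous (at y) V" using Vcont continuous_on_eq_continuous_at by blast
  have ls: "lyapunov_stable F"
    unfolding lyapunov_stable_def
  proof (intro allI impI)
    fix e :: real assume e: "e > 0"
    define m where "m = min r (k1 * e\<^sup>2)"
    have m: "m > 0" using r_pos k1_pos e by (simp add: m_def)
    obtain d where d: "d > 0" "\<And>y. dist y 0 < d \<Longrightarrow> dist (V y) (V 0) < m"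
      using Vat[of 0] m unfolding continuous_at_eps_delta by blast
    show "\<exists>d>0. \<forall>x. is_solution F x \<and> norm (x 0) < d \<longrightarrow> (\<forall>t\<ge>0. norm (x t) < e)"
    proof (intro exI[of _ d] conjI allI impI d(1))
      fix x and t :: real assume xs: "is_solution F x \<and> norm (x 0) < d" and t: "0 \<le> t"
      have "V (x 0) < m" using d(2)[of "x 0"] xs V0 Vnn[of "x 0"] by (simp add: dist_norm)
      then have "V (x 0) < r" "V (x 0) < k1 * e\<^sup>2" by (auto simp: m_def)
      then have "V (x t) < k1 * e\<^sup>2" using traj[of x] xs t by force
      then have "k1 * (norm (x t))\<^sup>2 < k1 * e\<^sup>2" using V_lower[of "x t"] by linarith
      then have "(norm (x t))\<^sup>2 < e\<^sup>2" using k1_pos by simp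
      then show "norm (x t) < e" using e by (simp add: power_less_imp_less_base)
    qed
  qed
  have "fixed_time_stable F"
    unfolding fixed_time_stable_def
  proof (intro conjI ls exI[of _ "V -` {..<r}"] exI[of _ T] allI impI)
    show "open (V -` {..<r})" by (intro continuous_open_vimage Vat) simp
    show "0 \<in> V -` {..<r}" using V0 r_pos by simp
    fix x t assume "is_solution F x \<and> x 0 \<in> V -` {..<r}" "T \<le> t"
    then show "x t = 0" using traj[of x] by auto
  qed
  then show ?thesis by (simp add: F_def)
qed

end
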